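(* Let $G=\mathbf{R}^k\times H$ where $H$ is a locally compact group having a compact open subgroup. Let $L$ be a closed subgroup of $G$ and let $L_1$ be the closure of the projection of $L$ to $H$. Then the path-connected component of $L$ in $\mathcal{S}(G)$ contains all subgroups $W\times L_1$ with $W$ a closed subgroup of $\mathbf{R}^k$. In particular, if $k\ge1$, the path-connected component of $L$ in $\mathcal{S}(G)$ is not reduced to $\{L\}$.
   Context: $\mathcal{S}(G)$ is the space of closed subgroups of $G$ with the Chabauty topology (basic open sets $\{F: F\cap K=\emptyset,\ F\cap U_i\ne\emptyset\ \forall i\}$, $K$ compact, $U_i$ open). *)

theory Defs
  imports "HOL-Analysis.Analysis"
begin

definition is_subgroup :: "'a::group_add set \<Rightarrow> bool" where
  "is_subgroup S \<longleftrightarrow> 0 \<in> S \<and> (\<forall>x\<in>S. \<forall>y\<in>S. x + y \<in> S) \<and> (\<forall>x\<in>S. - x \<in> S)"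

definition closed_subgroup :: "'a::{group_add,topological_space} set \<Rightarrow> bool" where
  "closed_subgroup S \<longleftrightarrow> closed S \<and> is_subgroup S"

text \<open>The Chabauty topology on the space S(G) of closed subgroups: generated by the sets
  {F. F \<inter> K = {}} (K compact) and {F. F \<inter> U \<noteq> {}} (U open), restricted to closed subgroups.
  (Finite intersections of subbasic sets give exactly the basic open sets of the paper.)\<close>
definition chabauty :: "'a::{group_add,topological_space} set topology" where
  "chabauty = subtopology
     (topology_generated_by
        ({{F. F \<inter> K = {}} | K. compact K} \<union> {{F. F \<inter> U \<noteq> {}} | U. open U}))
     {S. closed_subgroup S}"

end

theory Submission
  imports Defs
begin

definition chab_lim :: "('b \<Rightarrow> 'a::topological_space set) \<Rightarrow> 'a set \<Rightarrow> 'b filter \<Rightarrow> bool" where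
  "chab_lim \<Gamma> M0 F \<longleftrightarrow>
     (\<forall>y. y \<notin> M0 \<longrightarrow> (\<exists>Q. open Q \<and> y \<in> Q \<and> eventually (\<lambda>t. \<Gamma> t \<inter> Q = {}) F)) \<and>
     (\<forall>y\<in>M0. \<forall>Q. open Q \<longrightarrow> y \<in> Q \<longrightarrow> eventually (\<lambda>t. \<Gamma> t \<inter> Q \<noteq> {}) F)"

lemma chab_lim_cong:
  assumes "chab_lim \<Gamma> M0 F" "eventually (\<lambda>t. \<Gamma> t = \<Gamma>' t) F"
  shows "chab_lim \<Gamma>' M0 F"
proof -
  have 1: "eventually (\<lambda>t. \<Gamma>' t \<inter> Q = {}) F" if "eventually (\<lambda>t. \<Gamma> t \<inter> Q = {}) F" for Q
    using eventually_conj[OF that assms(2)] by (rule eventually_mono) auto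
  have 2: "eventually (\<lambda>t. \<Gamma>' t \<inter> Q \<noteq> {}) F" if "eventually (\<lambda>t. \<Gamma> t \<inter> Q \<noteq> {}) F" for Q
    using eventually_conj[OF that assms(2)] by (rule eventually_mono) auto
  show ?thesis using assms(1) 1 2 unfolding chab_lim_def by meson
qed

lemma chab_lim_compact:
  assumes "chab_lim \<Gamma> M0 F" "compact K" "M0 \<inter> K = {}"
  shows "eventually (\<lambda>t. \<Gamma> t \<inter> K = {}) F"
proof -
  have "\<forall>y\<in>K. \<exists>Q. open Q \<and> y \<in> Q \<and> eventually (\<lambda>t. \<Gamma> t \<inter> Q = {}) F"
    using assms unfolding chab_lim_def by blast
  then obtain Q where Q: "\<And>y. y\<in>K \<Longrightarrow> open (Q y) \<and> y \<in> Q y \<and> eventually (\<lambda>t. \<Gamma> t \<inter> Q y = {}) F"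
    by metis
  obtain C where C: "C \<subseteq> K" "finite C" "K \<subseteq> (\<Union>c\<in>C. Q c)"
    using compactE_image[OF assms(2), of K Q] Q by blast
  have "eventually (\<lambda>t. \<forall>c\<in>C. \<Gamma> t \<inter> Q c = {}) F"
    using C Q by (intro eventually_ball_finite) auto
  then show ?thesis by (rule eventually_mono) (use C in blast)
qed

lemma chab_path:
  fixes \<gamma> :: "real \<Rightarrow> 'a::{group_add,topological_space} set"
  assumes sub: "\<And>t. t \<in> {0..1} \<Longrightarrow> closed_subgroup (\<gamma> t)"
    and lim: "\<And>t. t \<in> {0..1} \<Longrightarrow> chab_lim \<gamma> (\<gamma> t) (at t within {0..1})"
  shows "path_component_of chabauty (\<gamma> 0) (\<gamma> 1)"
proof -
  let ?S = "{{F::'a set. F \<inter> K = {}} | K. compact K} \<union> {{F::'a set. F \<inter> U \<noteq> {}} | U. open U}"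
  have ev: "openin (top_of_set {0..1}) P"
    if P01: "P \<subseteq> {0..1}" and Pev: "\<And>t. t \<in> P \<Longrightarrow> eventually (\<lambda>s. s \<in> {0..1} \<longrightarrow> s \<in> P) (at t within {0..1})" for P :: "real set"
    unfolding openin_euclidean_subtopology_iff
  proof (intro conjI ballI P01)
    fix t assume "t \<in> P"
    then obtain d where "d > 0" "\<forall>x\<in>{0..1}. x \<noteq> t \<and> dist x t < d \<longrightarrow> x \<in> P"
      using Pev unfolding eventually_at by blast
    then show "\<exists>e>0. \<forall>x'\<in>{0..1}. dist x' t < e \<longrightarrow> x' \<in> P" using \<open>t \<in> P\<close> by (metis)
  qed
  have "continuous_map (top_of_set {0..1}) (topology_generated_by ?S) \<gamma>"
  proof (rule continuous_on_generated_topo)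
    fix U assume "U \<in> ?S"
    then consider K where "compact K" "U = {F. F \<inter> K = {}}" | V where "open V" "U = {F. F \<inter> V \<noteq> {}}"
      by blast
    then show "openin (top_of_set {0..1}) (\<gamma> -` U \<inter> topspace (top_of_set {0..1}))"
    proof cases
      case 1
      have "eventually (\<lambda>s. \<gamma> s \<inter> K = {}) (at t within {0..1})" if "t \<in> {0..1}" "\<gamma> t \<inter> K = {}" for t
        using chab_lim_compact[OF lim[OF that(1)] 1(1) that(2)] .
      then show ?thesis using 1
        by (intro ev) (auto intro: eventually_mono[of "\<lambda>s. \<gamma> s \<inter> K = {}"])
    next
      case 2
      have "eventually (\<lambda>s. \<gamma> s \<inter> V \<noteq> {}) (at t within {0..1})" if "t \<in> {0..1}" "\<gamma> t \<inter> V \<noteq> {}" for t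
        using lim[OF that(1)] 2(1) that(2) unfolding chab_lim_def by blast
      then show ?thesis using 2
        by (intro ev) (auto intro: eventually_mono[of "\<lambda>s. \<gamma> s \<inter> V \<noteq> {}"])
    qed
  next
    have "UNIV \<in> ?S" by (rule UnI1) (auto intro!: exI[of _ "{}"])
    then show "\<gamma> ` topspace (top_of_set {0..1}) \<subseteq> \<Union> ?S" by blast
  qed
  then have "pathin chabauty \<gamma>"
    unfolding pathin_def chabauty_def
    by (rule continuous_map_into_subtopology) (use sub in auto)
  then show ?thesis unfolding path_component_of_def by blast
qed

definition scl :: "real \<Rightarrow> ('a::real_vector \<times> 'h) set \<Rightarrow> ('a \<times> 'h) set" where
  "scl s M = (\<lambda>(v,h). (s *\<^sub>R v, h)) ` M"

lemma scl_1[simp]: "scl 1 M = M"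
  unfolding scl_def by (auto simp: image_def)

lemma mem_scl: "s \<noteq> 0 \<Longrightarrow> (x,h) \<in> scl s M \<longleftrightarrow> (inverse s *\<^sub>R x, h) \<in> M"
  unfolding scl_def by (force simp: image_def)

lemma scl_vimage: "s \<noteq> 0 \<Longrightarrow> scl s M = (\<lambda>p. (inverse s *\<^sub>R fst p, snd p)) -` M"
  using mem_scl[of s] by fastforce

lemma is_subgroupI:
  "0 \<in> S \<Longrightarrow> (\<And>x y. x \<in> S \<Longrightarrow> y \<in> S \<Longrightarrow> x + y \<in> S) \<Longrightarrow> (\<And>x. x \<in> S \<Longrightarrow> - x \<in> S) \<Longrightarrow> is_subgroup S"
  unfolding is_subgroup_def by blast

lemma is_subgroupD:
  assumes "is_subgroup S"
  shows "0 \<in> S" "x \<in> S \<Longrightarrow> y \<in> S \<Longrightarrow> x + y \<in> S" "x \<in> S \<Longrightarrow> - x \<in> S"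
  using assms unfolding is_subgroup_def by blast+

lemma scl_closed_subgroup:
  fixes M :: "('a::real_normed_vector \<times> 'h::{group_add,topological_space}) set"
  assumes "s \<noteq> 0" "closed_subgroup M"
  shows "closed_subgroup (scl s M)"
  unfolding closed_subgroup_def
proof
  show "closed (scl s M)" using assms unfolding scl_vimage[OF assms(1)] closed_subgroup_def
    by (intro closed_vimage continuous_intros) auto
  have sg: "is_subgroup M" using assms(2) unfolding closed_subgroup_def by blast
  show "is_subgroup (scl s M)"
  proof (rule is_subgroupI)
    show "0 \<in> scl s M" using is_subgroupD(1)[OF sg] assms(1)
      by (simp add: scl_vimage zero_prod_def)
  next
    fix x y assume "x \<in> scl s M" "y \<in> scl s M"
    then have "(inverse s *\<^sub>R fst x, snd x) + (inverse s *\<^sub>R fst y, snd y) \<in> M"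
      using is_subgroupD(2)[OF sg, of "(inverse s *\<^sub>R fst x, snd x)" "(inverse s *\<^sub>R fst y, snd y)"] assms(1)
      by (simp add: scl_vimage)
    then show "x + y \<in> scl s M" using assms(1)
      by (simp add: scl_vimage scaleR_add_right)
  next
    fix x assume "x \<in> scl s M"
    then show "- x \<in> scl s M" using is_subgroupD(3)[OF sg, of "(inverse s *\<^sub>R fst x, snd x)"] assms(1)
      by (simp add: scl_vimage)
  qed
qed

lemma closed_subgroup_Times:
  "closed_subgroup A \<Longrightarrow> closed_subgroup B \<Longrightarrow> closed_subgroup (A \<times> B)"
  unfolding closed_subgroup_def is_subgroup_def
  by (auto simp: closed_Times zero_prod_def plus_prod_def uminus_prod_def)

lemma scale_est: fixes x z :: "'a::real_normed_vector" and s s0 r :: real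
  assumes is0: "inverse s > 0" and is2: "inverse s < 2 * inverse s0" and zb: "norm (z - x) < s0 * r / 4"
  and s0: "s0 > 0" and r: "r > 0" and d2: "\<bar>inverse s - inverse s0\<bar> < r / (2 * (norm x + 1))"
  shows "norm (inverse s *\<^sub>R z - inverse s0 *\<^sub>R x) < r"
proof -
        have eq: "inverse s *\<^sub>R z - inverse s0 *\<^sub>R x = inverse s *\<^sub>R (z - x) + (inverse s - inverse s0) *\<^sub>R x"
          by (simp add: algebra_simps)
        have "norm (inverse s *\<^sub>R z - inverse s0 *\<^sub>R x) \<le> inverse s * norm (z - x) + \<bar>inverse s - inverse s0\<bar> * norm x"
          unfolding eq using norm_triangle_ineq[of "inverse s *\<^sub>R (z - x)" "(inverse s - inverse s0) *\<^sub>R x"] is0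
          by simp
        also have "inverse s * norm (z - x) \<le> 2 * inverse s0 * (s0 * r / 4)"
          using is0 is2 zb(1) s0 by (intro mult_mono) auto
        also have "2 * inverse s0 * (s0 * r / 4) = r / 2" using s0 by (simp add: field_simps)
        also have "\<bar>inverse s - inverse s0\<bar> * norm x \<le> r / (2 * (norm x + 1)) * norm x"
          using d2 by (intro mult_right_mono) auto
        also have "r / (2 * (norm x + 1)) * norm x < r / 2"
        proof -
          have "r / (2 * (norm x + 1)) * norm x = (r / 2) * (norm x / (norm x + 1))" by (simp add: field_simps)
          also have "\<dots> < (r/2) * 1" using r by (intro mult_strict_left_mono) (auto, smt (verit) norm_ge_zero divide_less_eq_1)
          finally show ?thesis by simp
        qed
        finally show "norm (inverse s *\<^sub>R z - inverse s0 *\<^sub>R x) < r" by simp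
qed
lemma inv_est: "\<bar>inverse (s::real) - inverse s0\<bar> < inverse s0 \<Longrightarrow> inverse s > 0 \<and> inverse s < 2 * inverse s0"
  unfolding abs_less_iff by linarith

lemma scl_cont:
  fixes M :: "('a::real_normed_vector \<times> 'h::topological_space) set"
  assumes "closed M" "s0 > 0" "(g \<longlongrightarrow> s0) F"
  shows "chab_lim (\<lambda>t. scl (g t) M) (scl s0 M) F"
  unfolding chab_lim_def
proof (intro conjI allI impI ballI)
  fix y assume "y \<notin> scl s0 M"
  obtain x h where y: "y = (x,h)" by fastforce
  have "(inverse s0 *\<^sub>R x, h) \<in> - M" using \<open>y \<notin> scl s0 M\<close> y mem_scl[of s0 x h M] assms(2) by auto
  then obtain A B where AB0: "open A" "open B" "(inverse s0 *\<^sub>R x, h) \<in> A \<times> B" "A \<times> B \<subseteq> - M"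
    using open_prod_elim[OF open_Compl[OF assms(1)]] by metis
  then have AB: "open A" "open B" "inverse s0 *\<^sub>R x \<in> A" "h \<in> B" "A \<times> B \<subseteq> - M" by auto
  obtain r where r: "r > 0" "ball (inverse s0 *\<^sub>R x) r \<subseteq> A"
    using AB open_contains_ball by blast
  define Q where "Q = ball x (s0 * r / 4) \<times> B"
  have "open Q" unfolding Q_def using AB by (simp add: open_Times)
  moreover have "y \<in> Q" unfolding Q_def y using AB r assms(2) by simp
  moreover have "eventually (\<lambda>t. scl (g t) M \<inter> Q = {}) F"
  proof -
    have it: "((\<lambda>t. inverse (g t)) \<longlongrightarrow> inverse s0) F"
      using assms by (intro tendsto_inverse) auto
    have "r / (2 * (norm x + 1)) > 0" proof (rule divide_pos_pos)
      show "0 < 2 * (norm x + 1)" by (smt (verit) norm_ge_zero)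
    qed (use r in auto)
    then have "min (inverse s0) (r / (2 * (norm x + 1))) > 0" using assms by simp
    from tendstoD[OF it this] show ?thesis
    proof (rule eventually_mono)
      fix t assume d: "dist (inverse (g t)) (inverse s0) < min (inverse s0) (r / (2 * (norm x + 1)))"
      let ?s = "g t"
      have d1: "\<bar>inverse ?s - inverse s0\<bar> < inverse s0" and d2: "\<bar>inverse ?s - inverse s0\<bar> < r / (2 * (norm x + 1))"
        using d by (simp_all add: dist_real_def)
      have is0: "inverse ?s > 0" and is2: "inverse ?s < 2 * inverse s0" using inv_est[OF d1] by auto
      then have "?s \<noteq> 0" by auto
      show "scl ?s M \<inter> Q = {}"
      proof (rule ccontr)
        assume "scl ?s M \<inter> Q \<noteq> {}"
        then obtain p where p: "p \<in> scl ?s M \<inter> Q" by blast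
        obtain z h' where zp: "p = (z,h')" by (cases p)
        have z: "(z,h') \<in> scl ?s M" "(z,h') \<in> Q" using p unfolding zp by blast+
        have zM: "(inverse ?s *\<^sub>R z, h') \<in> M" using mem_scl[OF \<open>?s \<noteq> 0\<close>, of z h' M] z(1) by blast
        have zb1: "z \<in> ball x (s0 * r / 4)" "h' \<in> B" using z(2) unfolding Q_def by (simp_all add: mem_Times_iff)
        have zb: "norm (z - x) < s0 * r / 4" "h' \<in> B" using zb1 by (simp_all add: dist_norm norm_minus_commute)
        have "norm (inverse ?s *\<^sub>R z - inverse s0 *\<^sub>R x) < r"
          by (rule scale_est[OF is0 is2 zb(1) assms(2) r(1) d2])
        then have "dist (inverse s0 *\<^sub>R x) (inverse ?s *\<^sub>R z) < r" by (simp add: dist_norm norm_minus_commute)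
        then have "inverse ?s *\<^sub>R z \<in> A" using r(2) unfolding mem_ball[symmetric] by blast
        then have "(inverse ?s *\<^sub>R z, h') \<in> A \<times> B" using zb(2) by simp
        then show False using zM AB(5) by blast
      qed
    qed
  qed
  ultimately show "\<exists>Q. open Q \<and> y \<in> Q \<and> (\<forall>\<^sub>F t in F. scl (g t) M \<inter> Q = {})" by blast
next
  fix y Q assume "y \<in> scl s0 M" "open Q" "y \<in> Q"
  then obtain v h where vh: "(v,h) \<in> M" "y = (s0 *\<^sub>R v, h)" unfolding scl_def by auto
  have "((\<lambda>t. (g t *\<^sub>R v, h)) \<longlongrightarrow> (s0 *\<^sub>R v, h)) F"
    by (intro tendsto_intros assms(3))
  from topological_tendstoD[OF this \<open>open Q\<close>] have "\<forall>\<^sub>F t in F. (g t *\<^sub>R v, h) \<in> Q"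
    using \<open>y \<in> Q\<close> vh by simp
  then show "\<forall>\<^sub>F t in F. scl (g t) M \<inter> Q \<noteq> {}"
  proof (rule eventually_mono)
    fix t assume "(g t *\<^sub>R v, h) \<in> Q"
    moreover have "(g t *\<^sub>R v, h) \<in> scl (g t) M" using vh(1) unfolding scl_def by force
    ultimately show "scl (g t) M \<inter> Q \<noteq> {}" by blast
  qed
qed

lemma closure_opens:
  "x \<in> closure S \<Longrightarrow> open T \<Longrightarrow> x \<in> T \<Longrightarrow> \<exists>y\<in>S. y \<in> T"
  using open_Int_closure_eq_empty[of T S] by blast

lemma closure_subgroup:
  fixes S :: "'h::topological_group_add set"
  assumes "is_subgroup S"
  shows "is_subgroup (closure S)"
proof (rule is_subgroupI)
  show "0 \<in> closure S" using is_subgroupD(1)[OF assms] closure_subset by blast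
next
  fix x y assume xy: "x \<in> closure S" "y \<in> closure S"
  show "x + y \<in> closure S"
  proof (rule ccontr)
    assume "x + y \<notin> closure S"
    define P where "P = (\<lambda>p. fst p + snd p) -` (- closure S)"
    have "open P" unfolding P_def by (intro open_vimage continuous_intros) auto
    moreover have "(x,y) \<in> P" unfolding P_def using \<open>x + y \<notin> closure S\<close> by simp
    ultimately obtain A B where AB: "open A" "open B" "(x,y) \<in> A \<times> B" "A \<times> B \<subseteq> P"
      using open_prod_elim by metis
    obtain a where a: "a \<in> S" "a \<in> A" using closure_opens[OF xy(1) AB(1)] AB(3) by auto
    obtain b where b: "b \<in> S" "b \<in> B" using closure_opens[OF xy(2) AB(2)] AB(3) by auto
    have "a + b \<in> S" using is_subgroupD(2)[OF assms a(1) b(1)] .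
    moreover have "(a,b) \<in> P" using AB(4) a b by blast
    ultimately show False unfolding P_def using closure_subset by auto
  qed
next
  fix x assume x: "x \<in> closure S"
  show "- x \<in> closure S"
  proof (rule ccontr)
    assume "- x \<notin> closure S"
    define P where "P = uminus -` (- closure S)"
    have "open P" unfolding P_def by (intro open_vimage continuous_intros) auto
    moreover have "x \<in> P" unfolding P_def using \<open>- x \<notin> closure S\<close> by simp
    ultimately obtain a where a: "a \<in> S" "a \<in> P" using closure_opens[OF x] by blast
    then show False unfolding P_def using is_subgroupD(3)[OF assms a(1)] closure_subset by auto
  qed
qed

lemma sg_nat_scale:
  fixes S :: "'a::real_vector set"
  assumes "is_subgroup S" "a \<in> S"
  shows "of_nat n *\<^sub>R a \<in> S"
  by (induction n) (auto simp: is_subgroupD[OF assms(1)] assms(2) scaleR_add_left)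

lemma sg_int_scale:
  fixes S :: "'a::real_vector set"
  assumes "is_subgroup S" "a \<in> S"
  shows "of_int n *\<^sub>R a \<in> S"
proof (cases "n \<ge> 0")
  case True
  then have "n = int (nat n)" by simp
  then show ?thesis using sg_nat_scale[OF assms, of "nat n"] by (metis of_int_of_nat_eq)
next
  case False
  then have "n = - int (nat (- n))" by simp
  then have "of_int n *\<^sub>R a = - (of_nat (nat (- n)) *\<^sub>R a)"
    by (metis of_int_minus of_int_of_nat_eq scaleR_minus_left)
  then show ?thesis using sg_nat_scale[OF assms, of "nat (-n)"] is_subgroupD(3)[OF assms(1)] by simp
qed

lemma sg_sum:
  assumes "is_subgroup S" "finite I" "\<And>i. i \<in> I \<Longrightarrow> f i \<in> S"
  shows "sum f I \<in> S"
  using assms(2,3) by (induction I rule: finite_induct) (auto simp: is_subgroupD[OF assms(1)])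

lemma grp_identity: "-(h0::'h::group_add) + h' = -(-h + h0) + (-h + h')"
  by (simp add: minus_add add.assoc)

lemma scl_memE:
  assumes "p \<in> scl s M"
  obtains v h where "(v,h) \<in> M" "p = (s *\<^sub>R v, h)"
  using assms unfolding scl_def by auto

lemma prod_open_nbhd:
  assumes "open Q" "(x,h) \<in> Q"
  obtains A B where "open A" "open B" "x \<in> A" "h \<in> B" "A \<times> B \<subseteq> Q"
proof -
  obtain A B where "open A" "open B" "(x,h) \<in> A \<times> B" "A \<times> B \<subseteq> Q"
    by (rule open_prod_elim[OF assms])
  then show ?thesis using that by simp
qed

lemma add_nbhd:
  fixes h :: "'h::topological_group_add"
  assumes "open B0" "h \<in> B0"
  obtains U1 N where "open U1" "open N" "h \<in> U1" "0 \<in> N" "\<And>a b. a \<in> U1 \<Longrightarrow> b \<in> N \<Longrightarrow> a + b \<in> B0"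
proof -
  define P where "P = (\<lambda>p::'h\<times>'h. fst p + snd p) -` B0"
  have "open P" unfolding P_def by (intro open_vimage assms(1) continuous_intros)
  moreover have "(h,0) \<in> P" unfolding P_def using assms(2) by simp
  ultimately obtain U1 N where UN: "open U1" "open N" "h \<in> U1" "0 \<in> N" "U1 \<times> N \<subseteq> P"
    by (rule prod_open_nbhd)
  have "a + b \<in> B0" if "a \<in> U1" "b \<in> N" for a b
  proof -
    have "(a,b) \<in> P" using UN(5) that by blast
    then show ?thesis unfolding P_def by simp
  qed
  then show ?thesis using that UN by blast
qed

lemma diff_nbhd:
  fixes N :: "'h::topological_group_add set"
  assumes "open N" "0 \<in> N"
  obtains N' where "open N'" "0 \<in> N'" "\<And>a b. a \<in> N' \<Longrightarrow> b \<in> N' \<Longrightarrow> - a + b \<in> N"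
proof -
  define P where "P = (\<lambda>p::'h\<times>'h. - fst p + snd p) -` N"
  have "open P" unfolding P_def by (intro open_vimage assms(1) continuous_intros)
  moreover have "(0,0) \<in> P" unfolding P_def using assms(2) by simp
  ultimately obtain C1 C2 where C: "open C1" "open C2" "0 \<in> C1" "0 \<in> C2" "C1 \<times> C2 \<subseteq> P"
    by (rule prod_open_nbhd)
  have "- a + b \<in> N" if "a \<in> C1 \<inter> C2" "b \<in> C1 \<inter> C2" for a b
  proof -
    have "(a,b) \<in> P" using C(5) that by blast
    then show ?thesis unfolding P_def by simp
  qed
  moreover have "open (C1 \<inter> C2)" "0 \<in> C1 \<inter> C2" using C by auto
  ultimately show ?thesis using that by blast
qed

lemma floor_approx:
  fixes s u :: real
  assumes "s > 0"
  shows "\<bar>s * of_int \<lfloor>u / s\<rfloor> - u\<bar> \<le> s"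
proof -
  have "of_int \<lfloor>u / s\<rfloor> \<le> u / s" "u / s < of_int \<lfloor>u / s\<rfloor> + 1" by linarith+
  then have "s * of_int \<lfloor>u / s\<rfloor> \<le> s * (u / s)" "s * (u / s) < s * (of_int \<lfloor>u / s\<rfloor> + 1)"
    using assms by (intro mult_left_mono mult_strict_left_mono; simp)+
  moreover have "s * (u / s) = u" using assms by simp
  ultimately have "s * of_int \<lfloor>u / s\<rfloor> \<le> u" "u < s * of_int \<lfloor>u / s\<rfloor> + s"
    using assms by (simp_all add: algebra_simps)
  then show ?thesis by linarith
qed

lemma span_int_approx:
  fixes A :: "'a::real_normed_vector set"
  assumes As: "is_subgroup A" and S: "finite S" "S \<subseteq> A" and s: "s > 0"
  shows "(\<Sum>a\<in>S. of_int \<lfloor>u a / s\<rfloor> *\<^sub>R a) \<in> A"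
    and "norm (s *\<^sub>R (\<Sum>a\<in>S. of_int \<lfloor>u a / s\<rfloor> *\<^sub>R a) - (\<Sum>a\<in>S. u a *\<^sub>R a)) \<le> s * (\<Sum>a\<in>S. norm a)"
proof -
  show "(\<Sum>a\<in>S. of_int \<lfloor>u a / s\<rfloor> *\<^sub>R a) \<in> A"
    using S by (intro sg_sum[OF As S(1)] sg_int_scale[OF As]) auto
  have eq: "s *\<^sub>R (\<Sum>a\<in>S. of_int \<lfloor>u a / s\<rfloor> *\<^sub>R a) - (\<Sum>a\<in>S. u a *\<^sub>R a)
      = (\<Sum>a\<in>S. (s * of_int \<lfloor>u a / s\<rfloor> - u a) *\<^sub>R a)"
    by (simp add: scaleR_sum_right sum_subtractf scaleR_diff_left)
  have "norm (\<Sum>a\<in>S. (s * of_int \<lfloor>u a / s\<rfloor> - u a) *\<^sub>R a) \<le> (\<Sum>a\<in>S. norm ((s * of_int \<lfloor>u a / s\<rfloor> - u a) *\<^sub>R a))"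
    by (rule norm_sum)
  also have "\<dots> \<le> (\<Sum>a\<in>S. s * norm a)"
  proof (rule sum_mono)
    fix a assume "a \<in> S"
    show "norm ((s * of_int \<lfloor>u a / s\<rfloor> - u a) *\<^sub>R a) \<le> s * norm a"
      unfolding norm_scaleR using floor_approx[OF s, of "u a"] by (intro mult_right_mono) auto
  qed
  also have "\<dots> = s * (\<Sum>a\<in>S. norm a)" by (simp add: sum_distrib_left)
  finally show "norm (s *\<^sub>R (\<Sum>a\<in>S. of_int \<lfloor>u a / s\<rfloor> *\<^sub>R a) - (\<Sum>a\<in>S. u a *\<^sub>R a)) \<le> s * (\<Sum>a\<in>S. norm a)"
    unfolding eq .
qed

lemma limB_lower:
  fixes L :: "('a::euclidean_space \<times> 'h::topological_group_add) set"
  assumes Ls: "is_subgroup L" and Kc: "compact K" and Ko: "open K" and Ks: "is_subgroup K"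
    and As: "is_subgroup A" and A_def: "A = {a. \<exists>c\<in>K. (a,c) \<in> L}"
    and g: "(g \<longlongrightarrow> 0) F" and gpos: "eventually (\<lambda>t. g t > 0) F"
    and xA: "x \<in> span A" and hL1: "h \<in> closure (snd ` L)" and oQ: "open Q" and yQ: "(x,h) \<in> Q"
  shows "\<forall>\<^sub>F t in F. scl (g t) L \<inter> Q \<noteq> {}"
proof -
  obtain A0 B0 where AB0: "open A0" "open B0" "x \<in> A0" "h \<in> B0" "A0 \<times> B0 \<subseteq> Q"
    by (rule prod_open_nbhd[OF oQ yQ])
  obtain r where r: "r > 0" "ball x r \<subseteq> A0" using AB0(1,3) open_contains_ball by blast
  obtain U1 N where UN: "open U1" "open N" "h \<in> U1" "0 \<in> N" "\<And>a b. a \<in> U1 \<Longrightarrow> b \<in> N \<Longrightarrow> a + b \<in> B0"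
    by (rule add_nbhd[OF AB0(2,4)]) blast
  obtain h' where h': "h' \<in> snd ` L" "h' \<in> U1" using closure_opens[OF hL1 UN(1,3)] by blast
  then obtain q' where q': "q' \<in> L" "h' = snd q'" by blast
  define v' where "v' = fst q'"
  have v'L: "(v',h') \<in> L" using q' unfolding v'_def by simp
  obtain N' where N': "open N'" "0 \<in> N'" "\<And>a b. a \<in> N' \<Longrightarrow> b \<in> N' \<Longrightarrow> - a + b \<in> N"
    by (rule diff_nbhd[OF UN(2,4)]) blast
  have opn: "open ((\<lambda>z. - k + z) -` N')" for k by (intro open_vimage N'(1) continuous_intros)
  have cov: "K \<subseteq> (\<Union>k\<in>K. (\<lambda>z. - k + z) -` N')"
  proof
    fix z assume "z \<in> K"
    then have "z \<in> (\<lambda>z'. - z + z') -` N'" using N'(2) by simp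
    then show "z \<in> (\<Union>k\<in>K. (\<lambda>z. - k + z) -` N')" using \<open>z \<in> K\<close> by blast
  qed
  obtain T where T: "T \<subseteq> K" "finite T" "K \<subseteq> (\<Union>k\<in>T. (\<lambda>z. - k + z) -` N')"
    by (rule compactE_image[OF Kc opn cov])
  define pk where "pk k = (SOME p. p \<in> L \<and> snd p \<in> K \<and> - k + snd p \<in> N')" for k
  define C where "C = (\<Sum>k\<in>T. norm (fst (pk k)))"
  have C0: "C \<ge> 0" unfolding C_def by (rule sum_nonneg) simp
  have R: "\<exists>a' w. (a',w) \<in> L \<and> w \<in> N \<and> norm (a - a') \<le> C" if aA: "a \<in> A" for a
  proof -
    obtain c where c: "c \<in> K" "(a,c) \<in> L" using aA unfolding A_def by blast
    then obtain k where k: "k \<in> T" "- k + c \<in> N'" using T(3) by blast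
    have "\<exists>p. p \<in> L \<and> snd p \<in> K \<and> - k + snd p \<in> N'"
      using c k by (intro exI[of _ "(a,c)"]) simp
    then have pk: "pk k \<in> L \<and> snd (pk k) \<in> K \<and> - k + snd (pk k) \<in> N'"
      unfolding pk_def by (rule someI_ex)
    define b where "b = fst (pk k)"
    define c' where "c' = snd (pk k)"
    have bc: "(b,c') \<in> L" "- k + c' \<in> N'" using pk unfolding b_def c'_def by simp_all
    have "- (b,c') + (a,c) \<in> L" using is_subgroupD(2)[OF Ls is_subgroupD(3)[OF Ls bc(1)] c(2)] .
    then have m: "(- b + a, - c' + c) \<in> L" by simp
    have w: "- c' + c \<in> N" unfolding grp_identity[of c' c k] using N'(3)[OF bc(2) k(2)] .
    have "norm (a - (- b + a)) = norm (fst (pk k))" unfolding b_def by simp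
    also have "\<dots> \<le> C" unfolding C_def using k(1) T(2) by (intro member_le_sum) simp_all
    finally show ?thesis using m w by blast
  qed
  obtain S u where S: "finite S" "S \<subseteq> A" "x = (\<Sum>a\<in>S. u a *\<^sub>R a)"
    using xA unfolding span_explicit by blast
  define D where "D = (\<Sum>a\<in>S. norm a)"
  have D0: "D \<ge> 0" unfolding D_def by (rule sum_nonneg) simp
  define M where "M = norm v' + C + D + 1"
  have M0: "M > 0" unfolding M_def using C0 D0 by (smt (verit) norm_ge_zero)
  have pos: "r / M > 0" using r(1) M0 by simp
  have "eventually (\<lambda>t. dist (g t) 0 < r / M \<and> g t > 0) F"
    using tendstoD[OF g pos] gpos by (rule eventually_conj)
  then show ?thesis
  proof (rule eventually_mono)
    fix t assume "dist (g t) 0 < r / M \<and> g t > 0"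
    then have s1: "g t < r / M" and s0: "g t > 0" by (auto simp: dist_real_def)
    define s where "s = g t"
    have s1': "s < r / M" and s0': "s > 0" using s1 s0 unfolding s_def by simp_all
    define as where "as = (\<Sum>a\<in>S. of_int \<lfloor>u a / s\<rfloor> *\<^sub>R a)"
    have asA: "as \<in> A" and est: "norm (s *\<^sub>R as - x) \<le> s * D"
      using span_int_approx[OF As S(1,2) s0', of u] unfolding as_def D_def S(3) by simp_all
    obtain a' w where aw: "(a',w) \<in> L" "w \<in> N" "norm (as - a') \<le> C" using R[OF asA] by blast
    have "(v',h') + (a',w) \<in> L" using is_subgroupD(2)[OF Ls v'L aw(1)] .
    then have pL: "(v' + a', h' + w) \<in> L" by simp
    have hB: "h' + w \<in> B0" using UN(5)[OF h'(2) aw(2)] .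
    have eq: "s *\<^sub>R (v' + a') - x = s *\<^sub>R v' - s *\<^sub>R (as - a') + (s *\<^sub>R as - x)"
      by (simp add: algebra_simps)
    have "norm (s *\<^sub>R (v' + a') - x) \<le> norm (s *\<^sub>R v' - s *\<^sub>R (as - a')) + norm (s *\<^sub>R as - x)"
      unfolding eq by (rule norm_triangle_ineq)
    also have "norm (s *\<^sub>R v' - s *\<^sub>R (as - a')) \<le> norm (s *\<^sub>R v') + norm (s *\<^sub>R (as - a'))"
      by (rule norm_triangle_ineq4)
    also have "norm (s *\<^sub>R v') = s * norm v'" using s0' by simp
    also have "norm (s *\<^sub>R (as - a')) = s * norm (as - a')" using s0' by simp
    also have "s * norm (as - a') \<le> s * C" using aw(3) s0' by (intro mult_left_mono) simp_all
    also note est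
    also have "s * norm v' + s * C + s * D < s * M" unfolding M_def using s0' by (simp add: algebra_simps)
    also have "s * M < r" using s1' M0 by (simp add: pos_less_divide_eq mult.commute)
    finally have "norm (s *\<^sub>R (v' + a') - x) < r" by simp
    then have "s *\<^sub>R (v' + a') \<in> A0" using r(2) by (simp add: subset_iff dist_norm norm_minus_commute)
    then have "(s *\<^sub>R (v' + a'), h' + w) \<in> Q" using hB AB0(5) by blast
    moreover have "(s *\<^sub>R (v' + a'), h' + w) \<in> scl s L" using pL unfolding scl_def by force
    ultimately show "scl (g t) L \<inter> Q \<noteq> {}" unfolding s_def by blast
  qed
qed

lemma limB:
  fixes L :: "('a::euclidean_space \<times> 'h::topological_group_add) set"
  assumes cL: "closed_subgroup L" and Kc: "compact K" and Ko: "open K" and Ks: "is_subgroup K"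
    and g: "(g \<longlongrightarrow> 0) F" and gpos: "eventually (\<lambda>t. g t > 0) F"
  shows "chab_lim (\<lambda>t. scl (g t) L) (span {a. \<exists>c\<in>K. (a,c) \<in> L} \<times> closure (snd ` L)) F"
proof -
  define A where "A = {a. \<exists>c\<in>K. (a,c) \<in> L}"
  define L1 where "L1 = closure (snd ` L)"
  have Ls: "is_subgroup L" and Lc: "closed L" using cL unfolding closed_subgroup_def by auto
  have As: "is_subgroup A"
  proof (rule is_subgroupI)
    show "0 \<in> A" unfolding A_def using is_subgroupD(1)[OF Ls] is_subgroupD(1)[OF Ks]
      by (auto simp: zero_prod_def)
  next
    fix x y assume "x \<in> A" "y \<in> A"
    then obtain c d where "c \<in> K" "d \<in> K" "(x,c) \<in> L" "(y,d) \<in> L" unfolding A_def by auto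
    then show "x + y \<in> A" unfolding A_def
      using is_subgroupD(2)[OF Ls \<open>(x,c) \<in> L\<close> \<open>(y,d) \<in> L\<close>] is_subgroupD(2)[OF Ks \<open>c \<in> K\<close> \<open>d \<in> K\<close>]
      by auto
  next
    fix x assume "x \<in> A"
    then obtain c where "c \<in> K" "(x,c) \<in> L" unfolding A_def by auto
    then show "- x \<in> A" unfolding A_def
      using is_subgroupD(3)[OF Ls \<open>(x,c) \<in> L\<close>] is_subgroupD(3)[OF Ks \<open>c \<in> K\<close>]
      by auto
  qed
  have sndL1: "snd p \<in> L1" if "p \<in> L" for p
  proof -
    have "snd p \<in> snd ` L" using that by (rule imageI)
    then show ?thesis unfolding L1_def using closure_subset[of "snd ` L"] by (rule subsetD[rotated])
  qed
  have "chab_lim (\<lambda>t. scl (g t) L) (span A \<times> L1) F"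
    unfolding chab_lim_def
  proof (intro conjI allI impI ballI)
    fix y assume ny: "y \<notin> span A \<times> L1"
    obtain x h where y: "y = (x,h)" by (cases y)
    show "\<exists>Q. open Q \<and> y \<in> Q \<and> (\<forall>\<^sub>F t in F. scl (g t) L \<inter> Q = {})"
    proof (cases "h \<in> L1")
      case False
      define Q where "Q = (UNIV :: 'a set) \<times> (- L1)"
      have "open Q" unfolding Q_def L1_def by (intro open_Times open_UNIV open_Compl closed_closure)
      moreover have "y \<in> Q" unfolding Q_def y using False by simp
      moreover have "\<forall>t. scl (g t) L \<inter> Q = {}"
      proof (intro allI equals0I)
        fix t p assume "p \<in> scl (g t) L \<inter> Q"
        then obtain q where q: "q \<in> L" "p = (\<lambda>(v,y). (g t *\<^sub>R v, y)) q" "p \<in> Q" unfolding scl_def by blast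
        obtain v h' where "q = (v,h')" by (cases q)
        with q have "(v,h') \<in> L" "p = (g t *\<^sub>R v, h')" "p \<in> Q" by simp_all
        then show False using sndL1[of "(v,h')"] unfolding Q_def by simp
      qed
      then have "eventually (\<lambda>t. scl (g t) L \<inter> Q = {}) F" by simp
      ultimately show ?thesis by blast
    next
      case True
      then have xA: "x \<notin> span A" using ny unfolding y by simp
      define Kh where "Kh = (\<lambda>z. - h + z) -` K"
      have oKh: "open Kh" unfolding Kh_def by (intro open_vimage Ko continuous_intros)
      have "h \<in> Kh" unfolding Kh_def using is_subgroupD(1)[OF Ks] by simp
      then obtain h0 where "h0 \<in> snd ` L" "h0 \<in> Kh" using closure_opens[OF True[unfolded L1_def] oKh] by blast
      then obtain q0 where "q0 \<in> L" "h0 = snd q0" by blast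
      define v0 where "v0 = fst q0"
      have v0: "(v0,h0) \<in> L" "-h + h0 \<in> K"
        using \<open>h0 \<in> Kh\<close> \<open>q0 \<in> L\<close> unfolding Kh_def v0_def \<open>h0 = snd q0\<close> by simp_all
      define \<delta> where "\<delta> = infdist x (span A)"
      have \<delta>: "\<delta> > 0" unfolding \<delta>_def
      proof (rule infdist_pos_not_in_closed)
        show "closed (span A)" by (intro closed_subspace subspace_span)
        show "span A \<noteq> {}" using span_zero by blast
        show "x \<notin> span A" by (rule xA)
      qed
      define Q where "Q = ball x (\<delta>/2) \<times> Kh"
      have "open Q" unfolding Q_def using oKh by (intro open_Times) auto
      moreover have "y \<in> Q" unfolding Q_def y using \<delta> \<open>h \<in> Kh\<close> by auto
      moreover have "eventually (\<lambda>t. scl (g t) L \<inter> Q = {}) F"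
      proof -
        have "2 * (norm v0 + 1) > 0" by (smt (verit) norm_ge_zero)
        then have pos: "\<delta> / (2 * (norm v0 + 1)) > 0" using \<delta> by (intro divide_pos_pos)
        have "eventually (\<lambda>t. dist (g t) 0 < \<delta> / (2 * (norm v0 + 1)) \<and> g t > 0) F"
          using tendstoD[OF g pos] gpos by (rule eventually_conj)
        then show ?thesis
        proof (rule eventually_mono)
          fix t assume "dist (g t) 0 < \<delta> / (2 * (norm v0 + 1)) \<and> g t > 0"
          then have s1: "g t < \<delta> / (2 * (norm v0 + 1))" and s0: "g t > 0" by auto
          let ?s = "g t"
          show "scl ?s L \<inter> Q = {}"
          proof (rule ccontr)
            assume "scl ?s L \<inter> Q \<noteq> {}"
            then obtain p where p: "p \<in> scl ?s L" "p \<in> Q" by blast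
            obtain v h' where vh0: "(v,h') \<in> L" "p = (?s *\<^sub>R v, h')" using p(1) by (rule scl_memE)
            then have vh: "(v,h') \<in> L" "(?s *\<^sub>R v, h') \<in> Q" using p(2) by simp_all
            then have d1: "dist x (?s *\<^sub>R v) < \<delta>/2" and hK: "-h + h' \<in> K"
              unfolding Q_def Kh_def by auto
            have "-(v0,h0) + (v,h') \<in> L" using is_subgroupD(2)[OF Ls is_subgroupD(3)[OF Ls v0(1)] vh(1)] .
            moreover have "-h0 + h' \<in> K"
              unfolding grp_identity[of h0 h' h] using is_subgroupD(2)[OF Ks is_subgroupD(3)[OF Ks v0(2)] hK] .
            ultimately have "-v0 + v \<in> A" unfolding A_def by auto
            then have "?s *\<^sub>R (-v0 + v) \<in> span A" by (intro span_mul span_base)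
            then have "\<delta> \<le> dist x (?s *\<^sub>R (-v0 + v))" unfolding \<delta>_def by (rule infdist_le)
            also have "dist x (?s *\<^sub>R (-v0 + v)) \<le> dist x (?s *\<^sub>R v) + norm (?s *\<^sub>R v0)"
            proof -
              have "?s *\<^sub>R (-v0 + v) = ?s *\<^sub>R v - ?s *\<^sub>R v0" by (simp add: algebra_simps)
              then have "dist x (?s *\<^sub>R (-v0 + v)) = norm ((x - ?s *\<^sub>R v) + ?s *\<^sub>R v0)"
                by (simp add: dist_norm algebra_simps)
              also have "\<dots> \<le> norm (x - ?s *\<^sub>R v) + norm (?s *\<^sub>R v0)" by (rule norm_triangle_ineq)
              finally show ?thesis by (simp add: dist_norm)
            qed
            also have "norm (?s *\<^sub>R v0) = ?s * norm v0" using s0 by simp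
            also have "?s * norm v0 \<le> \<delta> / (2 * (norm v0 + 1)) * norm v0"
              using s1 by (intro mult_right_mono) auto
            also have "\<delta> / (2 * (norm v0 + 1)) * norm v0 \<le> \<delta> / 2"
            proof -
              have "\<delta> / (2 * (norm v0 + 1)) * norm v0 = (\<delta> / 2) * (norm v0 / (norm v0 + 1))"
                by (simp add: field_simps)
              also have "\<dots> \<le> (\<delta>/2) * 1"
              proof (rule mult_left_mono)
                show "norm v0 / (norm v0 + 1) \<le> 1" by (smt (verit) norm_ge_zero divide_le_eq_1)
              qed (use \<delta> in simp)
              finally show ?thesis by simp
            qed
            finally show False using d1 by simp
          qed
        qed
      qed
      ultimately show ?thesis by blast
    qed
  next
    fix y Q assume yin: "y \<in> span A \<times> L1" and oQ: "open Q" and yQ: "y \<in> Q"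
    obtain x h where y: "y = (x,h)" by (cases y)
    have xA: "x \<in> span A" and hL1: "h \<in> closure (snd ` L)" using yin unfolding y L1_def by simp_all
    show "\<forall>\<^sub>F t in F. scl (g t) L \<inter> Q \<noteq> {}"
      by (rule limB_lower[OF Ls Kc Ko Ks As A_def g gpos xA hL1 oQ yQ[unfolded y]])
  qed
  then show ?thesis unfolding A_def L1_def .
qed

lemma Gset_closed_subgroup:
  fixes E :: "'a::euclidean_space set"
  assumes Z: "closed Z" "is_subgroup (Z :: real set)"
  shows "closed_subgroup {x. \<forall>e\<in>E. x \<bullet> e \<in> Z}"
  unfolding closed_subgroup_def
proof
  have eq: "{x. \<forall>e\<in>E. x \<bullet> e \<in> Z} = (\<Inter>e\<in>E. (\<lambda>x. x \<bullet> e) -` Z)" by auto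
  show "closed {x. \<forall>e\<in>E. x \<bullet> e \<in> Z}" unfolding eq
    by (intro closed_INT ballI closed_vimage Z(1) continuous_intros)
  show "is_subgroup {x. \<forall>e\<in>E. x \<bullet> e \<in> Z}"
    by (rule is_subgroupI) (simp_all add: is_subgroupD[OF Z(2)] inner_add_left inner_minus_left)
qed

lemma Ints_subgroup: "is_subgroup (\<int> :: real set)"
  unfolding is_subgroup_def by (auto intro: Ints_add Ints_minus)

lemma zero_subgroup: "is_subgroup {0 :: 'a::group_add}"
  unfolding is_subgroup_def by auto

lemma limD:
  fixes E :: "'a::euclidean_space set" and L1 :: "'h::topological_space set"
  assumes cL1: "closed L1" and g: "filterlim g at_top F"
  shows "chab_lim (\<lambda>t. scl (g t) ({x. \<forall>e\<in>E. x \<bullet> e \<in> \<int>} \<times> L1)) ({x. \<forall>e\<in>E. x \<bullet> e = 0} \<times> L1) F"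
  unfolding chab_lim_def
proof (intro conjI allI impI ballI)
  let ?G = "{x. \<forall>e\<in>E. x \<bullet> e \<in> \<int>} \<times> L1"
  fix y assume ny: "y \<notin> {x. \<forall>e\<in>E. x \<bullet> e = 0} \<times> L1"
  obtain x h where y: "y = (x,h)" by (cases y)
  show "\<exists>Q. open Q \<and> y \<in> Q \<and> (\<forall>\<^sub>F t in F. scl (g t) ?G \<inter> Q = {})"
  proof (cases "h \<in> L1")
    case False
    define Q where "Q = (UNIV :: 'a set) \<times> (- L1)"
    have "open Q" unfolding Q_def using cL1 by (intro open_Times open_UNIV open_Compl)
    moreover have "y \<in> Q" unfolding Q_def y using False by simp
    moreover have "\<forall>t. scl (g t) ?G \<inter> Q = {}"
    proof (intro allI equals0I)
      fix t p assume p: "p \<in> scl (g t) ?G \<inter> Q"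
      then have "p \<in> scl (g t) ?G" by blast
      then obtain v h' where "(v,h') \<in> ?G" "p = (g t *\<^sub>R v, h')" by (rule scl_memE)
      then show False using p unfolding Q_def by simp
    qed
    then have "eventually (\<lambda>t. scl (g t) ?G \<inter> Q = {}) F" by simp
    ultimately show ?thesis by blast
  next
    case True
    then obtain e where e: "e \<in> E" "x \<bullet> e \<noteq> 0" using ny unfolding y by auto
    define c where "c = x \<bullet> e"
    have c0: "\<bar>c\<bar> > 0" using e(2) unfolding c_def by simp
    define Q where "Q = ((\<lambda>z. z \<bullet> e) -` ball c (\<bar>c\<bar>/2)) \<times> (UNIV :: 'h set)"
    have "open Q" unfolding Q_def by (intro open_Times open_UNIV open_vimage open_ball continuous_intros)
    moreover have "y \<in> Q" unfolding Q_def y c_def using c0 by (simp add: c_def)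
    moreover have "eventually (\<lambda>t. scl (g t) ?G \<inter> Q = {}) F"
      using g unfolding filterlim_at_top
    proof -
      have "eventually (\<lambda>t. 2 * \<bar>c\<bar> + 1 \<le> g t) F" using g unfolding filterlim_at_top by blast
      then show ?thesis
      proof (rule eventually_mono)
        fix t assume st: "2 * \<bar>c\<bar> + 1 \<le> g t"
        show "scl (g t) ?G \<inter> Q = {}"
        proof (rule equals0I)
          fix p assume p: "p \<in> scl (g t) ?G \<inter> Q"
          then have "p \<in> scl (g t) ?G" by blast
          then obtain v h' where vh: "(v,h') \<in> ?G" "p = (g t *\<^sub>R v, h')" by (rule scl_memE)
          have nI: "v \<bullet> e \<in> \<int>" using vh(1) e(1) by simp
          have "dist c (g t * (v \<bullet> e)) < \<bar>c\<bar>/2" using p vh(2) unfolding Q_def by simp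
          then have d: "\<bar>g t * (v \<bullet> e) - c\<bar> < \<bar>c\<bar>/2" by (simp add: dist_real_def abs_minus_commute)
          show False
          proof (cases "v \<bullet> e = 0")
            case True
            then show False using d c0 by simp
          next
            case False
            then have n1: "\<bar>v \<bullet> e\<bar> \<ge> 1" using Ints_nonzero_abs_ge1[OF nI] by simp
            have gt0: "g t \<ge> 0" using st abs_ge_zero[of c] by linarith
            have "g t * 1 \<le> g t * \<bar>v \<bullet> e\<bar>" using n1 gt0 by (rule mult_left_mono)
            also have "\<dots> = \<bar>g t * (v \<bullet> e)\<bar>" using gt0 by (simp add: abs_mult)
            finally have "g t \<le> \<bar>g t * (v \<bullet> e)\<bar>" by simp
            moreover have "\<bar>g t * (v \<bullet> e)\<bar> \<le> \<bar>g t * (v \<bullet> e) - c\<bar> + \<bar>c\<bar>"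
              using abs_triangle_ineq[of "g t * (v \<bullet> e) - c" c] by simp
            ultimately show False using d st abs_ge_zero[of c] by linarith
          qed
        qed
      qed
    qed
    ultimately show ?thesis by blast
  qed
next
  let ?G = "{x. \<forall>e\<in>E. x \<bullet> e \<in> \<int>} \<times> L1"
  fix y Q assume yin: "y \<in> {x. \<forall>e\<in>E. x \<bullet> e = 0} \<times> L1" and oQ: "open Q" and yQ: "y \<in> Q"
  obtain x h where y: "y = (x,h)" by (cases y)
  have "eventually (\<lambda>t. 1 \<le> g t) F" using g unfolding filterlim_at_top by blast
  then show "\<forall>\<^sub>F t in F. scl (g t) ?G \<inter> Q \<noteq> {}"
  proof (rule eventually_mono)
    fix t assume "1 \<le> g t"
    then have "g t \<noteq> 0" by simp
    have "(x,h) \<in> scl (g t) ?G" unfolding mem_scl[OF \<open>g t \<noteq> 0\<close>] using yin unfolding y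
      by (simp add: inner_scaleR_left)
    then show "scl (g t) ?G \<inter> Q \<noteq> {}" using yQ unfolding y by blast
  qed
qed

lemma subspace_to_G1:
  fixes V :: "'a::euclidean_space set"
  assumes sV: "subspace V"
  obtains E where "V = {x. \<forall>e\<in>E. x \<bullet> e = 0}" "span {x. \<forall>e\<in>E. x \<bullet> e \<in> \<int>} = UNIV"
proof -
  define Vp where "Vp = {y. \<forall>x\<in>V. orthogonal x y}"
  have sVp: "subspace Vp" unfolding Vp_def by (rule subspace_orthogonal_to_vectors)
  obtain B where B: "B \<subseteq> Vp" "pairwise orthogonal B" "\<And>x. x \<in> B \<Longrightarrow> norm x = 1" "independent B" "card B = dim Vp" "span B = Vp"
    by (rule orthonormal_basis_subspace[OF sVp]) blast
  have spV: "span V = V" using sV by simp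
  have decomp: "\<exists>y z. y \<in> V \<and> z \<in> Vp \<and> x = y + z" for x
  proof -
    obtain y z where yz: "y \<in> span V" "\<And>w. w \<in> span V \<Longrightarrow> orthogonal z w" "x = y + z"
      by (rule orthogonal_subspace_decomp_exists[where S=V and x=x]) blast
    have "orthogonal w z" if "w \<in> V" for w
    proof -
      have "w \<in> span V" using that by (rule span_base)
      then have "orthogonal z w" by (rule yz(2))
      then show ?thesis by (metis orthogonal_commute)
    qed
    then have "z \<in> Vp" unfolding Vp_def by blast
    then show ?thesis using yz(1,3) spV by blast
  qed
  have Binner: "x \<bullet> e = 0" if xe: "x \<in> V" "e \<in> B" for x e
  proof -
    have "e \<in> Vp" using B(1) xe(2) by (rule subsetD)
    then have "orthogonal x e" using xe(1) unfolding Vp_def by simp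
    then show ?thesis unfolding orthogonal_def .
  qed
  have eqV: "V = {x. \<forall>e\<in>B. x \<bullet> e = 0}"
  proof
    show "V \<subseteq> {x. \<forall>e\<in>B. x \<bullet> e = 0}" using Binner by blast
  next
    show "{x. \<forall>e\<in>B. x \<bullet> e = 0} \<subseteq> V"
    proof
      fix x assume x: "x \<in> {x. \<forall>e\<in>B. x \<bullet> e = 0}"
      obtain y z where yz: "y \<in> V" "z \<in> Vp" "x = y + z" using decomp by blast
      have oz: "orthogonal z e" if eB: "e \<in> B" for e
      proof -
        have "x \<bullet> e = 0" using x eB by simp
        moreover have "y \<bullet> e = 0" using Binner[OF yz(1) eB] .
        ultimately show ?thesis unfolding orthogonal_def yz(3) by (simp add: inner_add_left)
      qed
      have "z \<in> span B" using yz(2) B(6) by simp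
      then have "orthogonal z z" using oz by (rule orthogonal_to_span)
      then have "z = 0" by (simp add: orthogonal_self)
      then show "x \<in> V" using yz by simp
    qed
  qed
  have BG: "B \<subseteq> {x. \<forall>e\<in>B. x \<bullet> e \<in> \<int>}"
  proof (intro subsetI CollectI ballI)
    fix b e assume "b \<in> B" "e \<in> B"
    show "b \<bullet> e \<in> \<int>"
    proof (cases "b = e")
      case True
      then have "b \<bullet> e = (norm b)^2" by (simp add: power2_norm_eq_inner)
      then show ?thesis using B(3)[OF \<open>b \<in> B\<close>] by simp
    next
      case False
      then have "orthogonal b e" using B(2) \<open>b \<in> B\<close> \<open>e \<in> B\<close> unfolding pairwise_def by blast
      then show ?thesis unfolding orthogonal_def by simp
    qed
  qed
  have VG: "V \<subseteq> {x. \<forall>e\<in>B. x \<bullet> e \<in> \<int>}" using Binner by auto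
  have "span {x. \<forall>e\<in>B. x \<bullet> e \<in> \<int>} = UNIV"
  proof (intro antisym subset_UNIV subsetI)
    fix x :: 'a assume "x \<in> UNIV"
    obtain y z where yz: "y \<in> V" "z \<in> Vp" "x = y + z" using decomp by blast
    have "y \<in> span {x. \<forall>e\<in>B. x \<bullet> e \<in> \<int>}" using VG yz(1) by (blast intro: span_base)
    moreover have "z \<in> span {x. \<forall>e\<in>B. x \<bullet> e \<in> \<int>}" using span_mono[OF BG] yz(2) B(6) by blast
    ultimately show "x \<in> span {x. \<forall>e\<in>B. x \<bullet> e \<in> \<int>}" unfolding yz(3) by (rule span_add)
  qed
  then show ?thesis using that eqV by blast
qed

lemma eventually_at_ne:
  assumes "d > 0" "\<And>x. x \<in> S \<Longrightarrow> x \<noteq> a \<Longrightarrow> dist x a < d \<Longrightarrow> P x"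
  shows "eventually P (at a within S)"
  unfolding eventually_at using assms by blast

lemma path_scl:
  fixes M M0 :: "('a::real_normed_vector \<times> 'h::{group_add,topological_space}) set" and g :: "real \<Rightarrow> real"
  assumes cM: "closed_subgroup M" and cM0: "closed_subgroup M0"
    and gpos: "\<And>t. t \<in> {0<..1} \<Longrightarrow> g t > 0"
    and gc: "\<And>t. t \<in> {0<..1} \<Longrightarrow> (g \<longlongrightarrow> g t) (at t within {0..1})"
    and g1: "g 1 = 1"
    and lim0: "chab_lim (\<lambda>t. scl (g t) M) M0 (at 0 within {0..1})"
  shows "path_component_of chabauty M0 M"
proof -
  define \<gamma> where "\<gamma> t = (if t = 0 then M0 else scl (g t) M)" for t
  have clM: "closed M" using cM unfolding closed_subgroup_def by blast
  have "path_component_of chabauty (\<gamma> 0) (\<gamma> 1)"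
  proof (rule chab_path)
    fix t :: real assume t: "t \<in> {0..1}"
    show "closed_subgroup (\<gamma> t)"
    proof (cases "t = 0")
      case True
      then show ?thesis using cM0 unfolding \<gamma>_def by simp
    next
      case False
      then have "t \<in> {0<..1}" using t by simp
      then have "g t \<noteq> 0" using gpos by (metis less_irrefl)
      then show ?thesis using False scl_closed_subgroup[OF _ cM] unfolding \<gamma>_def by simp
    qed
    show "chab_lim \<gamma> (\<gamma> t) (at t within {0..1})"
    proof (cases "t = 0")
      case True
      have ev: "eventually (\<lambda>s. scl (g s) M = \<gamma> s) (at t within {0..1})"
        by (rule eventually_at_ne[of 1]) (simp_all add: \<gamma>_def True)
      show ?thesis using chab_lim_cong[OF lim0 ev[unfolded True]] True unfolding \<gamma>_def by simp
    next
      case False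
      then have t': "t \<in> {0<..1}" using t by simp
      have ev: "eventually (\<lambda>s. scl (g s) M = \<gamma> s) (at t within {0..1})"
      proof (rule eventually_at_ne[of t])
        show "t > 0" using t' by simp
        fix x assume "x \<in> {0..1}" "x \<noteq> t" "dist x t < t"
        then have "x \<noteq> 0" by (auto simp: dist_real_def)
        then show "scl (g x) M = \<gamma> x" unfolding \<gamma>_def by simp
      qed
      have "chab_lim (\<lambda>s. scl (g s) M) (scl (g t) M) (at t within {0..1})"
        by (rule scl_cont[OF clM gpos[OF t'] gc[OF t']])
      from chab_lim_cong[OF this ev] show ?thesis using False unfolding \<gamma>_def by simp
    qed
  qed
  then show ?thesis by (simp add: \<gamma>_def g1)
qed

lemma subspace_closed_subgroup:
  fixes V :: "'a::euclidean_space set"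
  assumes "subspace V"
  shows "closed_subgroup V"
  unfolding closed_subgroup_def is_subgroup_def
  using assms closed_subspace subspace_0 subspace_add subspace_neg by blast

lemma snd_subgroup:
  assumes "is_subgroup (L :: ('a::group_add \<times> 'h::group_add) set)"
  shows "is_subgroup (snd ` L)"
proof (rule is_subgroupI)
  show "0 \<in> snd ` L" using is_subgroupD(1)[OF assms] by (metis snd_zero image_eqI)
next
  fix x y assume "x \<in> snd ` L" "y \<in> snd ` L"
  then obtain p q where "p \<in> L" "q \<in> L" "x = snd p" "y = snd q" by blast
  then show "x + y \<in> snd ` L" using is_subgroupD(2)[OF assms \<open>p \<in> L\<close> \<open>q \<in> L\<close>]
    by (metis snd_add image_eqI)
next
  fix x assume "x \<in> snd ` L"
  then obtain p where "p \<in> L" "x = snd p" by blast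
  then show "- x \<in> snd ` L" using is_subgroupD(3)[OF assms \<open>p \<in> L\<close>]
    by (metis snd_uminus image_eqI)
qed

lemma closure_snd_closed_subgroup:
  fixes L :: "('a::real_normed_vector \<times> 'h::topological_group_add) set"
  assumes "closed_subgroup L"
  shows "closed_subgroup (closure (snd ` L))"
  unfolding closed_subgroup_def
  using closure_subgroup[OF snd_subgroup] assms unfolding closed_subgroup_def by blast

lemma to_span:
  fixes L :: "('a::euclidean_space \<times> 'h::topological_group_add) set"
  assumes cL: "closed_subgroup L" and Kc: "compact K" and Ko: "open K" and Ks: "is_subgroup K"
  shows "path_component_of chabauty L (span {a. \<exists>c\<in>K. (a,c) \<in> L} \<times> closure (snd ` L))"
proof -
  have cM0: "closed_subgroup (span {a. \<exists>c\<in>K. (a,c) \<in> L} \<times> closure (snd ` L))"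
    by (intro closed_subgroup_Times subspace_closed_subgroup subspace_span closure_snd_closed_subgroup cL)
  have gpos: "eventually (\<lambda>t::real. t > 0) (at 0 within {0..1})"
    by (rule eventually_at_ne[of 1]) auto
  have lim: "chab_lim (\<lambda>t. scl t L) (span {a. \<exists>c\<in>K. (a,c) \<in> L} \<times> closure (snd ` L)) (at 0 within {0..1})"
    using limB[OF cL Kc Ko Ks, of "\<lambda>t. t" "at 0 within {0..1}"] gpos by simp
  have "path_component_of chabauty (span {a. \<exists>c\<in>K. (a,c) \<in> L} \<times> closure (snd ` L)) L"
    by (rule path_scl[OF cL cM0, of "\<lambda>t. t"]) (use lim in simp_all)
  then show ?thesis by (rule path_component_of_sym)
qed

lemma A_Times:
  fixes K L1 :: "'h::zero set"
  assumes "0 \<in> K" "0 \<in> L1"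
  shows "{a. \<exists>c\<in>K. (a,c) \<in> W \<times> L1} = W"
  using assms by auto

lemma snd_Times_closure:
  assumes "0 \<in> W" "closed L1"
  shows "closure (snd ` (W \<times> L1)) = L1"
proof -
  have "snd ` (W \<times> L1) = L1" using assms(1) by force
  then show ?thesis using assms(2) by simp
qed

lemma subspace_path:
  fixes V :: "'a::euclidean_space set" and L1 K :: "'h::topological_group_add set"
  assumes sV: "subspace V" and cL1: "closed_subgroup L1"
    and Kc: "compact K" and Ko: "open K" and Ks: "is_subgroup K"
  shows "path_component_of chabauty (V \<times> L1) (UNIV \<times> L1)"
proof -
  obtain E where E: "V = {x. \<forall>e\<in>E. x \<bullet> e = 0}" "span {x. \<forall>e\<in>E. x \<bullet> e \<in> \<int>} = UNIV"
    by (rule subspace_to_G1[OF sV])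
  define G1 where "G1 = {x::'a. \<forall>e\<in>E. x \<bullet> e \<in> \<int>}"
  have clL1: "closed L1" and sL1: "is_subgroup L1" using cL1 unfolding closed_subgroup_def by auto
  have cG: "closed_subgroup (G1 \<times> L1)" unfolding G1_def
    by (intro closed_subgroup_Times Gset_closed_subgroup closed_Ints Ints_subgroup cL1)
  have cV: "closed_subgroup (V \<times> L1)"
    by (intro closed_subgroup_Times subspace_closed_subgroup sV cL1)
  have at01: "at (0::real) within {0..1} = at_right 0" by (rule at_within_Icc_at_right) simp
  have fl: "filterlim (\<lambda>t::real. inverse t) at_top (at 0 within {0..1})"
    unfolding at01 by (rule filterlim_inverse_at_top_right)
  have lim0: "chab_lim (\<lambda>t. scl (inverse t) (G1 \<times> L1)) (V \<times> L1) (at 0 within {0..1})"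
    unfolding G1_def E(1) by (rule limD[OF clL1 fl])
  have p1: "path_component_of chabauty (V \<times> L1) (G1 \<times> L1)"
  proof (rule path_scl[OF cG cV, of inverse])
    fix t :: real assume "t \<in> {0<..1}"
    then show "inverse t > 0" by simp
    show "(inverse \<longlongrightarrow> inverse t) (at t within {0..1})"
      using \<open>t \<in> {0<..1}\<close> by (intro tendsto_inverse tendsto_ident_at) auto
  qed (use lim0 in simp_all)
  have p2: "path_component_of chabauty (G1 \<times> L1)
      (span {a. \<exists>c\<in>K. (a,c) \<in> G1 \<times> L1} \<times> closure (snd ` (G1 \<times> L1)))"
    by (rule to_span[OF cG Kc Ko Ks])
  have "{a. \<exists>c\<in>K. (a,c) \<in> G1 \<times> L1} = G1"
    by (rule A_Times[OF is_subgroupD(1)[OF Ks] is_subgroupD(1)[OF sL1]])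
  moreover have "0 \<in> G1" unfolding G1_def by simp
  then have "closure (snd ` (G1 \<times> L1)) = L1" by (rule snd_Times_closure[OF _ clL1])
  moreover have "span G1 = UNIV" using E(2) unfolding G1_def .
  ultimately have p2': "path_component_of chabauty (G1 \<times> L1) (UNIV \<times> L1)" using p2 by simp
  show ?thesis by (rule path_component_of_trans[OF p1 p2'])
qed

theorem proposition7p2:
  fixes L :: "((real ^ 'k) \<times> 'h::{topological_group_add, t2_space}) set"
  assumes "locally_compact_space (euclidean :: 'h topology)"
    and "\<exists>K :: 'h set. compact K \<and> open K \<and> is_subgroup K"
    and "closed_subgroup L"
  shows "(\<forall>W :: (real ^ 'k) set. closed_subgroup W \<longrightarrow>
            path_component_of chabauty L (W \<times> closure (snd ` L)))
       \<and> path_component_of_set chabauty L \<noteq> {L}"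
proof -
  obtain K :: "'h set" where K: "compact K" "open K" "is_subgroup K" using assms(2) by blast
  define L1 where "L1 = closure (snd ` L)"
  have cL1: "closed_subgroup L1" unfolding L1_def by (rule closure_snd_closed_subgroup[OF assms(3)])
  have clL1: "closed L1" and sL1: "is_subgroup L1" using cL1 unfolding closed_subgroup_def by auto
  have p1: "path_component_of chabauty L (span {a. \<exists>c\<in>K. (a,c) \<in> L} \<times> L1)"
    unfolding L1_def by (rule to_span[OF assms(3) K])
  have p2: "path_component_of chabauty (span {a. \<exists>c\<in>K. (a,c) \<in> L} \<times> L1) (UNIV \<times> L1)"
    by (rule subspace_path[OF subspace_span cL1 K])
  have LU: "path_component_of chabauty L (UNIV \<times> L1)" by (rule path_component_of_trans[OF p1 p2])
  have W: "path_component_of chabauty L (W \<times> L1)" if cW: "closed_subgroup W" for W :: "(real ^ 'k) set"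
  proof -
    have cWL: "closed_subgroup (W \<times> L1)" by (rule closed_subgroup_Times[OF cW cL1])
    have W0: "0 \<in> W" using cW unfolding closed_subgroup_def is_subgroup_def by blast
    have q1: "path_component_of chabauty (W \<times> L1)
        (span {a. \<exists>c\<in>K. (a,c) \<in> W \<times> L1} \<times> closure (snd ` (W \<times> L1)))"
      by (rule to_span[OF cWL K])
    have "{a. \<exists>c\<in>K. (a,c) \<in> W \<times> L1} = W"
      by (rule A_Times[OF is_subgroupD(1)[OF K(3)] is_subgroupD(1)[OF sL1]])
    moreover have "closure (snd ` (W \<times> L1)) = L1" by (rule snd_Times_closure[OF W0 clL1])
    ultimately have q1': "path_component_of chabauty (W \<times> L1) (span W \<times> L1)" using q1 by simp
    have q2: "path_component_of chabauty (span W \<times> L1) (UNIV \<times> L1)"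
      by (rule subspace_path[OF subspace_span cL1 K])
    have "path_component_of chabauty (W \<times> L1) (UNIV \<times> L1)" by (rule path_component_of_trans[OF q1' q2])
    then have "path_component_of chabauty (UNIV \<times> L1) (W \<times> L1)" by (rule path_component_of_sym)
    then show ?thesis by (rule path_component_of_trans[OF LU])
  qed
  have part1: "\<forall>W :: (real ^ 'k) set. closed_subgroup W \<longrightarrow> path_component_of chabauty L (W \<times> L1)"
    using W by blast
  have c0: "closed_subgroup ({0} :: (real ^ 'k) set)"
    unfolding closed_subgroup_def is_subgroup_def by simp
  have cU: "closed_subgroup (UNIV :: (real ^ 'k) set)"
    unfolding closed_subgroup_def is_subgroup_def by simp
  have part2: "path_component_of_set chabauty L \<noteq> {L}"
  proof
    assume eq: "path_component_of_set chabauty L = {L}"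
    have "{0} \<times> L1 \<in> path_component_of_set chabauty L" using W[OF c0] by simp
    moreover have "UNIV \<times> L1 \<in> path_component_of_set chabauty L" using W[OF cU] by simp
    ultimately have "({0} :: (real ^ 'k) set) \<times> L1 = UNIV \<times> L1" using eq by simp
    moreover have "0 \<in> L1" using is_subgroupD(1)[OF sL1] .
    ultimately have "({0} :: (real ^ 'k) set) = UNIV" by (metis Times_eq_cancel2 empty_iff)
    moreover obtain b :: "real ^ 'k" where "b \<in> Basis" using nonempty_Basis by blast
    then have "b \<noteq> 0" by (rule nonzero_Basis)
    ultimately show False by blast
  qed
  show ?thesis using part1 part2 unfolding L1_def by blast
qed

end
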